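(* Fix $\alpha\in(0,1]$, $\epsilon>0$, a function $A:(2\pi,\infty)\to[0,\infty)$ and a function $B:\{(\beta_L,\beta_R)\in(0,\infty)^2:\beta_L\beta_R>4\pi^2\}\to[0,\infty)$. Consider the class $\mathcal{C}$ of all unitary, Virasoro invariant, modular invariant 2D CFTs (any central charge $c>1$) satisfying $$\sum_{h+\bar h\leqslant\frac c{12}+\epsilon}n_{h,\bar h}e^{-(h+\bar h)\beta}\leqslant A(\beta)\ \ (\beta>2\pi),\qquad \tilde Z_L^{\rm Vir}(\alpha;\beta_L,\beta_R)\leqslant B(\beta_L,\beta_R)\ \ (\beta_L\beta_R>4\pi^2),$$ where $n_{h,\bar h}$ are Virasoro primary multiplicities. Then for each $(\beta_L,\beta_R)\in\mathcal{D}_\alpha$ there is a constant $K<\infty$, independent of the theory in $\mathcal{C}$ and of $c$, with $\left|\log Z(\beta_L,\beta_R)-\frac c{24}(\beta_L+\beta_R)\right|\leqslant K$ for all theories in $\mathcal{C}$; and for each $(\beta_L,\beta_R)$ with $(4\pi^2/\beta_L,4\pi^2/\beta_R)\in\mathcal{D}_\alpha$ there is such a constant $K$ with $\left|\log Z(\beta_L,\beta_R)-\frac{\pi^2c}{6}\left(\frac1{\beta_L}+\frac1{\beta_R}\right)\right|\leqslant K$ for all theories in $\mathcal{C}$.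
   Context: Let $\eta(\beta)=e^{-\beta/24}\prod_{n\geqslant1}(1-e^{-n\beta})$. A unitary, Virasoro invariant, modular invariant 2D CFT with central charge $c>1$ is given by a countable set of Virasoro primary weights $(h,\bar h)$, $h,\bar h\geqslant0$, with multiplicities $n_{h,\bar h}\in\mathbb{N}$, where the vacuum $(0,0)$ has multiplicity $1$ (normalizable vacuum) and primaries with $h=0$ or $\bar h=0$ other than the vacuum have the form $(J,0)$ or $(0,J)$ with $J$ a positive integer; the partition function is $Z(\beta_L,\beta_R)=\sum n_{h,\bar h}\chi_h(\beta_L)\chi_{\bar h}(\beta_R)$ with $\chi_0(\beta)=\frac{e^{\frac{c-1}{24}\beta}}{\eta(\beta)}(1-e^{-\beta})$ and $\chi_h(\beta)=\frac{e^{\frac{c-1}{24}\beta}}{\eta(\beta)}e^{-h\beta}$ for $h>0$; $Z$ is finite for all $\beta_L,\beta_R>0$ and $Z(\beta_L,\beta_R)=Z(4\pi^2/\beta_L,4\pi^2/\beta_R)$. Define $$\tilde Z_L^{\rm Vir}(\alpha;\beta_L,\beta_R)=(1-e^{-\beta_L})(1-e^{-\beta_R})+\sum_{0<\min(h,\bar h)<\frac{\alpha(c-1)}{24}}n_{h,\bar h}e^{-h\beta_L-\bar h\beta_R}+\sum_{J\geqslant1}n_{J,0}e^{-J\beta_L}(1-e^{-\beta_R})+\sum_{J\geqslant1}n_{0,J}(1-e^{-\beta_L})e^{-J\beta_R}.$$ Let $\phi_\alpha(\beta)=\max\left\{\frac{4\pi^2}{\beta},\ \frac12\left(\alpha(4\pi-\beta)+\sqrt{\alpha^2(4\pi-\beta)^2+16\pi^2(1-\alpha)}\right)\right\}$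 and $\mathcal{D}_\alpha=\{\beta_R>2\pi,\ \beta_L>\phi_\alpha(\beta_R)\}\cup\{\beta_L>2\pi,\ \beta_R>\phi_\alpha(\beta_L)\}$. *)

theory Defs
  imports "HOL-Analysis.Analysis"
begin

definition eta :: "real \<Rightarrow> real" where
  "eta \<beta> = exp (-\<beta>/24) * (\<Prod>n. (1 - exp (- real (Suc n) * \<beta>)))"

definition vchi :: "real \<Rightarrow> real \<Rightarrow> real \<Rightarrow> real" where
  "vchi c h \<beta> = exp ((c - 1) / 24 * \<beta>) / eta \<beta> *
      (if h = 0 then 1 - exp (-\<beta>) else exp (- h * \<beta>))"

text \<open>A theory is given by its central charge c and the multiplicity function
  n of Virasoro primaries (h, hbar); n p = 0 means p is not in the spectrum.\<close>
definition Zpart :: "real \<Rightarrow> (real \<times> real \<Rightarrow> nat) \<Rightarrow> real \<Rightarrow> real \<Rightarrow> real" where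
  "Zpart c n \<beta>L \<beta>R = (\<Sum>\<^sub>\<infinity>p\<in>UNIV. real (n p) * vchi c (fst p) \<beta>L * vchi c (snd p) \<beta>R)"

definition is_CFT :: "real \<Rightarrow> (real \<times> real \<Rightarrow> nat) \<Rightarrow> bool" where
  "is_CFT c n \<longleftrightarrow>
     c > 1 \<and>
     countable {p. n p > 0} \<and>
     (\<forall>p. n p > 0 \<longrightarrow> fst p \<ge> 0 \<and> snd p \<ge> 0) \<and>
     n (0, 0) = 1 \<and>
     (\<forall>h hb. n (h, hb) > 0 \<and> (h = 0 \<or> hb = 0) \<and> (h, hb) \<noteq> (0, 0) \<longrightarrow>
        (hb = 0 \<and> (\<exists>J::nat. J \<ge> 1 \<and> h = real J)) \<or>
        (h = 0 \<and> (\<exists>J::nat. J \<ge> 1 \<and> hb = real J))) \<and>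
     (\<forall>\<beta>L \<beta>R. \<beta>L > 0 \<and> \<beta>R > 0 \<longrightarrow>
        (\<lambda>p. real (n p) * vchi c (fst p) \<beta>L * vchi c (snd p) \<beta>R) summable_on UNIV) \<and>
     (\<forall>\<beta>L \<beta>R. \<beta>L > 0 \<and> \<beta>R > 0 \<longrightarrow>
        Zpart c n \<beta>L \<beta>R = Zpart c n (4 * pi^2 / \<beta>L) (4 * pi^2 / \<beta>R))"

definition ZtildeL :: "real \<Rightarrow> real \<Rightarrow> (real \<times> real \<Rightarrow> nat) \<Rightarrow> real \<Rightarrow> real \<Rightarrow> real" where
  "ZtildeL \<alpha> c n \<beta>L \<beta>R =
     (1 - exp (-\<beta>L)) * (1 - exp (-\<beta>R))
     + (\<Sum>\<^sub>\<infinity>p\<in>{p. 0 < min (fst p) (snd p) \<and> min (fst p) (snd p) < \<alpha> * (c - 1) / 24}.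
          real (n p) * exp (- fst p * \<beta>L - snd p * \<beta>R))
     + (\<Sum>\<^sub>\<infinity>J\<in>{1::nat..}. real (n (real J, 0)) * exp (- real J * \<beta>L) * (1 - exp (-\<beta>R)))
     + (\<Sum>\<^sub>\<infinity>J\<in>{1::nat..}. real (n (0, real J)) * (1 - exp (-\<beta>L)) * exp (- real J * \<beta>R))"

definition phi :: "real \<Rightarrow> real \<Rightarrow> real" where
  "phi \<alpha> \<beta> = max (4 * pi^2 / \<beta>)
     ((\<alpha> * (4 * pi - \<beta>) + sqrt (\<alpha>^2 * (4 * pi - \<beta>)^2 + 16 * pi^2 * (1 - \<alpha>))) / 2)"

definition Dom :: "real \<Rightarrow> (real \<times> real) set" where
  "Dom \<alpha> = {(\<beta>L, \<beta>R). \<beta>R > 2 * pi \<and> \<beta>L > phi \<alpha> \<beta>R} \<union>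
            {(\<beta>L, \<beta>R). \<beta>L > 2 * pi \<and> \<beta>R > phi \<alpha> \<beta>L}"

definition in_class :: "real \<Rightarrow> real \<Rightarrow> (real \<Rightarrow> real) \<Rightarrow> (real \<Rightarrow> real \<Rightarrow> real)
    \<Rightarrow> real \<Rightarrow> (real \<times> real \<Rightarrow> nat) \<Rightarrow> bool" where
  "in_class \<alpha> \<epsilon> A B c n \<longleftrightarrow>
     is_CFT c n \<and>
     (\<forall>\<beta>. \<beta> > 2 * pi \<longrightarrow>
        (\<Sum>\<^sub>\<infinity>p\<in>{p. fst p + snd p \<le> c / 12 + \<epsilon>}.
           real (n p) * exp (- (fst p + snd p) * \<beta>)) \<le> A \<beta>) \<and>
     (\<forall>\<beta>L \<beta>R. \<beta>L > 0 \<and> \<beta>R > 0 \<and> \<beta>L * \<beta>R > 4 * pi^2 \<longrightarrow>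
        ZtildeL \<alpha> c n \<beta>L \<beta>R \<le> B \<beta>L \<beta>R)"

end

theory Submission
  imports Defs
begin


definition Pr :: "real \<Rightarrow> real" where
  "Pr \<beta> = (\<Prod>n. (1 - exp (- real (Suc n) * \<beta>)))"

definition Rp :: "real \<Rightarrow> real" where
  "Rp \<beta> = (\<Prod>n. (1 - exp (- real (Suc (Suc n)) * \<beta>)))"

lemma eta_Pr: "eta \<beta> = exp (-\<beta>/24) * Pr \<beta>"
  by (simp add: eta_def Pr_def)

lemma fac_lt: "\<beta> > 0 \<Longrightarrow> exp (- real (Suc n) * \<beta>) < 1"
proof -
  assume "\<beta> > 0"
  then have "0 < real (Suc n) * \<beta>" by simp
  then show ?thesis by (simp only: mult_minus_left exp_less_one_iff neg_less_0_iff_less)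
qed

lemma fac_pos: "\<beta> > 0 \<Longrightarrow> 0 < 1 - exp (- real (Suc n) * \<beta>)"
  using fac_lt[of \<beta> n] by linarith

lemma conv_fac:
  assumes "\<beta> > 0"
  shows "convergent_prod (\<lambda>n. 1 - exp (- real (Suc n) * \<beta>))"
proof -
  have e: "exp (- real (Suc k) * \<beta>) = exp (-\<beta>) * exp (-\<beta>) ^ k" for k
  proof -
    have "exp (- real (Suc k) * \<beta>) = exp (real (Suc k) * (-\<beta>))" by (simp only: mult_minus_left mult_minus_right)
    also have "\<dots> = exp (-\<beta>) ^ Suc k" by (rule exp_of_nat_mult)
    finally show ?thesis by simp
  qed
  have s: "summable (\<lambda>k. \<bar>- exp (- real (Suc k) * \<beta>)\<bar>)"
  proof -
    have "(\<lambda>k. \<bar>- exp (- real (Suc k) * \<beta>)\<bar>) = (\<lambda>k. exp (-\<beta>) * exp (-\<beta>) ^ k)"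
      using e by auto
    moreover have "summable (\<lambda>k. exp (-\<beta>) * exp (-\<beta>) ^ k)"
      by (rule summable_mult) (simp add: summable_geometric assms)
    ultimately show ?thesis by simp
  qed
  have ne: "- exp (- real (Suc k) * \<beta>) \<noteq> -1" for k
    using fac_lt[OF assms, of k] by linarith
  show ?thesis using summable_imp_convergent_prod_real[OF s ne] by simp
qed

lemma Pr_pos: "\<beta> > 0 \<Longrightarrow> Pr \<beta> > 0"
  unfolding Pr_def using less_0_prodinf[OF conv_fac fac_pos] by blast

lemma conv_fac2:
  assumes "\<beta> > 0"
  shows "convergent_prod (\<lambda>n. 1 - exp (- real (Suc (Suc n)) * \<beta>))"
  using conv_fac[OF assms] convergent_prod_Suc_iff[of "\<lambda>n. 1 - exp (- real (Suc n) * \<beta>)"] by simp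

lemma Rp_pos: "\<beta> > 0 \<Longrightarrow> Rp \<beta> > 0"
  unfolding Rp_def using less_0_prodinf[OF conv_fac2 fac_pos[of _ "Suc i" for i]] by blast

lemma Pr_split: "\<beta> > 0 \<Longrightarrow> Pr \<beta> = (1 - exp (-\<beta>)) * Rp \<beta>"
proof -
  assume b: "\<beta> > 0"
  have "Rp \<beta> = Pr \<beta> / (1 - exp (- real (Suc 0) * \<beta>))"
    unfolding Rp_def Pr_def
    using prodinf_split_head[of "\<lambda>n. 1 - exp (- real (Suc n) * \<beta>)", OF conv_fac[OF b]]
      fac_pos[OF b, of 0] by simp
  moreover have "1 - exp (-\<beta>) > 0" using b by simp
  ultimately show ?thesis by simp
qed

lemma Rp_mono:
  assumes "0 < a" "a \<le> x"
  shows "Rp a \<le> Rp x"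
  unfolding Rp_def
proof (rule prodinf_le)
  show "(\<lambda>n. 1 - exp (- real (Suc (Suc n)) * a)) has_prod Rp a" unfolding Rp_def
    using conv_fac2[OF assms(1)] by (simp add: convergent_prod_has_prod_iff)
  show "(\<lambda>n. 1 - exp (- real (Suc (Suc n)) * x)) has_prod Rp x" unfolding Rp_def
    using conv_fac2[of x] assms by (simp add: convergent_prod_has_prod_iff)
  fix n
  show "0 \<le> 1 - exp (- real (Suc (Suc n)) * a) \<and> 1 - exp (- real (Suc (Suc n)) * a) \<le> 1 - exp (- real (Suc (Suc n)) * x)"
    using fac_pos[OF assms(1), of "Suc n"] assms by (auto intro: mult_left_mono)
qed



lemma Pr_mono:
  assumes "0 < a" "a \<le> x"
  shows "Pr a \<le> Pr x"
proof -
  have "1 - exp (-a) \<le> 1 - exp (-x)" using assms by simp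
  moreover have "0 \<le> 1 - exp (-a)" using assms by simp
  moreover have "0 \<le> Rp a" using Rp_pos[OF assms(1)] by simp
  ultimately show ?thesis
    using Pr_split[OF assms(1)] Pr_split[of x] assms Rp_mono[OF assms]
    by (simp add: mult_mono)
qed

definition ch :: "real \<Rightarrow> real \<Rightarrow> real" where
  "ch h \<beta> = (if h = 0 then 1 - exp (-\<beta>) else exp (- h * \<beta>))"

definition g :: "real \<Rightarrow> real \<Rightarrow> real" where
  "g h \<beta> = ch h \<beta> / Pr \<beta>"

lemma ch_pos: "\<beta> > 0 \<Longrightarrow> ch h \<beta> > 0"
  by (simp add: ch_def)

lemma ch_le: "\<beta> > 0 \<Longrightarrow> ch h \<beta> \<le> exp (- h * \<beta>)"
  by (simp add: ch_def)

lemma ch_ge: "\<beta> > 0 \<Longrightarrow> (1 - exp (-\<beta>)) * exp (- h * \<beta>) \<le> ch h \<beta>"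
  by (simp add: ch_def)

lemma vchi_g: "\<beta> > 0 \<Longrightarrow> vchi c h \<beta> = exp (c / 24 * \<beta>) * g h \<beta>"
proof -
  assume b: "\<beta> > 0"
  have "exp ((c - 1) / 24 * \<beta>) = exp (c / 24 * \<beta>) * exp (-\<beta>/24)"
    by (simp add: exp_add[symmetric] algebra_simps diff_divide_distrib)
  then show ?thesis
    unfolding vchi_def g_def eta_Pr ch_def using Pr_pos[OF b] by (simp add: field_simps)
qed

lemma g_nonneg: "\<beta> > 0 \<Longrightarrow> g h \<beta> \<ge> 0"
  unfolding g_def using ch_pos Pr_pos by (simp add: less_imp_le)

lemma g_mono:
  assumes "0 < a" "a \<le> x"
  shows "g h x \<le> exp (- h * (x - a)) * g h a"
proof (cases "h = 0")
  case True
  have x: "x > 0" using assms by simp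
  have "g h x = 1 / Rp x" unfolding g_def ch_def using True Pr_split[OF x] x Rp_pos[OF x]
    by simp
  also have "\<dots> \<le> 1 / Rp a" using Rp_mono[OF assms] Rp_pos[OF assms(1)]
    by (simp add: frac_le)
  also have "\<dots> = g h a" unfolding g_def ch_def using True Pr_split[OF assms(1)] assms Rp_pos[OF assms(1)]
    by simp
  finally show ?thesis using True by simp
next
  case False
  have x: "x > 0" using assms by simp
  have "g h x = exp (- h * x) / Pr x" unfolding g_def ch_def using False by simp
  also have "\<dots> \<le> exp (- h * x) / Pr a"
    using Pr_mono[OF assms] Pr_pos[OF assms(1)] by (simp add: frac_le)
  also have "\<dots> = exp (- h * (x - a)) * g h a" unfolding g_def ch_def using False
    by (simp add: exp_add[symmetric] algebra_simps)
  finally show ?thesis .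
qed

definition tf :: "(real \<times> real \<Rightarrow> nat) \<Rightarrow> real \<Rightarrow> real \<Rightarrow> real \<times> real \<Rightarrow> real" where
  "tf n x y p = real (n p) * g (fst p) x * g (snd p) y"

definition Wf :: "(real \<times> real \<Rightarrow> nat) \<Rightarrow> real \<Rightarrow> real \<Rightarrow> real" where
  "Wf n x y = infsum (tf n x y) UNIV"

lemma tf_nonneg: "x > 0 \<Longrightarrow> y > 0 \<Longrightarrow> tf n x y p \<ge> 0"
  unfolding tf_def using g_nonneg by simp

lemma tf_mono:
  assumes "0 < a" "a \<le> x" "0 < b" "b \<le> y"
  shows "tf n x y p \<le> exp (- fst p * (x - a) - snd p * (y - b)) * tf n a b p"
proof -
  have 1: "g (fst p) x \<le> exp (- fst p * (x - a)) * g (fst p) a" by (rule g_mono[OF assms(1,2)])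
  have 2: "g (snd p) y \<le> exp (- snd p * (y - b)) * g (snd p) b" by (rule g_mono[OF assms(3,4)])
  have "g (fst p) x * g (snd p) y \<le> (exp (- fst p * (x - a)) * g (fst p) a) * (exp (- snd p * (y - b)) * g (snd p) b)"
    by (rule mult_mono[OF 1 2]) (use g_nonneg assms in auto)
  then have "real (n p) * (g (fst p) x * g (snd p) y) \<le> real (n p) * ((exp (- fst p * (x - a)) * g (fst p) a) * (exp (- snd p * (y - b)) * g (snd p) b))"
    by (rule mult_left_mono) simp
  then show ?thesis unfolding tf_def by (simp add: exp_diff exp_add algebra_simps exp_minus)
qed



lemma term_eq:
  assumes "x > 0" "y > 0"
  shows "real (n p) * vchi c (fst p) x * vchi c (snd p) y = exp (c / 24 * (x + y)) * tf n x y p"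
  unfolding tf_def vchi_g[OF assms(1)] vchi_g[OF assms(2)]
  by (simp add: exp_add[symmetric] algebra_simps)

lemma Zpart_Wf:
  assumes "x > 0" "y > 0"
  shows "Zpart c n x y = exp (c / 24 * (x + y)) * Wf n x y"
  unfolding Zpart_def Wf_def term_eq[OF assms] by (rule infsum_cmult_right')

lemma tf_summable:
  assumes "is_CFT c n" "x > 0" "y > 0"
  shows "tf n x y summable_on UNIV"
proof -
  have "(\<lambda>p. real (n p) * vchi c (fst p) x * vchi c (snd p) y) summable_on UNIV"
    using assms unfolding is_CFT_def by blast
  then have "(\<lambda>p. exp (c / 24 * (x + y)) * tf n x y p) summable_on UNIV"
    unfolding term_eq[OF assms(2,3)] .
  then show ?thesis by (subst (asm) summable_on_cmult_right') simp_all
qed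

lemma tf_summable_on:
  assumes "is_CFT c n" "x > 0" "y > 0"
  shows "tf n x y summable_on S"
  using summable_on_subset[OF tf_summable[OF assms]] by simp

lemma Wf_modular:
  assumes "is_CFT c n" "x > 0" "y > 0"
  shows "Wf n x y = exp (c / 24 * (4*pi^2/x + 4*pi^2/y - x - y)) * Wf n (4*pi^2/x) (4*pi^2/y)"
proof -
  have x': "4*pi^2/x > 0" "4*pi^2/y > 0" using assms by auto
  have "Zpart c n x y = Zpart c n (4*pi^2/x) (4*pi^2/y)"
    using assms unfolding is_CFT_def by blast
  then have "exp (c / 24 * (x + y)) * Wf n x y = exp (c / 24 * (4*pi^2/x + 4*pi^2/y)) * Wf n (4*pi^2/x) (4*pi^2/y)"
    unfolding Zpart_Wf[OF assms(2,3)] Zpart_Wf[OF x'] .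
  then have "Wf n x y = exp (c / 24 * (4*pi^2/x + 4*pi^2/y)) / exp (c / 24 * (x + y)) * Wf n (4*pi^2/x) (4*pi^2/y)"
    by (simp add: field_simps)
  also have "exp (c / 24 * (4*pi^2/x + 4*pi^2/y)) / exp (c / 24 * (x + y)) = exp (c / 24 * (4*pi^2/x + 4*pi^2/y - x - y))"
    by (simp add: exp_diff[symmetric] algebra_simps)
  finally show ?thesis .
qed

lemma Wf_nonneg: "x > 0 \<Longrightarrow> y > 0 \<Longrightarrow> Wf n x y \<ge> 0"
  unfolding Wf_def by (rule infsum_nonneg) (rule tf_nonneg)

lemma Wf_lower:
  assumes "is_CFT c n" "x > 0" "y > 0"
  shows "Wf n x y \<ge> (1 - exp (-x)) * (1 - exp (-y)) / (Pr x * Pr y)"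
proof -
  have n0: "n (0,0) = 1" using assms unfolding is_CFT_def by blast
  have "infsum (tf n x y) {(0,0)} \<le> infsum (tf n x y) UNIV"
    by (rule infsum_mono2) (auto intro: tf_summable_on[OF assms] tf_nonneg assms)
  moreover have "infsum (tf n x y) {(0,0)} = tf n x y (0,0)" by simp
  moreover have "tf n x y (0,0) = (1 - exp (-x)) * (1 - exp (-y)) / (Pr x * Pr y)"
    unfolding tf_def g_def ch_def using n0 by simp
  ultimately show ?thesis unfolding Wf_def by simp
qed

lemma Wf_lower_pos: "x > 0 \<Longrightarrow> y > 0 \<Longrightarrow> (1 - exp (-x)) * (1 - exp (-y)) / (Pr x * Pr y) > 0"
  using Pr_pos[of x] Pr_pos[of y] by simp

lemma Wf_mono:
  assumes "is_CFT c n" "0 < a" "a \<le> x" "0 < b" "b \<le> y"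
  shows "Wf n x y \<le> Wf n a b"
  unfolding Wf_def
proof (rule infsum_mono)
  show "tf n x y summable_on UNIV" using assms by (intro tf_summable) auto
  show "tf n a b summable_on UNIV" using assms by (intro tf_summable) auto
  fix p :: "real \<times> real"
  show "tf n x y p \<le> tf n a b p"
  proof (cases "n p > 0")
    case True
    have sup: "\<forall>p. n p > 0 \<longrightarrow> fst p \<ge> 0 \<and> snd p \<ge> 0" using assms(1) unfolding is_CFT_def by blast
    then have "fst p \<ge> 0" "snd p \<ge> 0" using True by blast+
    then have "fst p * (x - a) \<ge> 0" "snd p * (y - b) \<ge> 0"
      using assms by (simp_all add: mult_nonneg_nonneg)
    then have "- fst p * (x - a) - snd p * (y - b) \<le> 0"
      by (simp only: mult_minus_left)
    then have e: "exp (- fst p * (x - a) - snd p * (y - b)) \<le> 1"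
      by (simp only: exp_le_one_iff)
    have t: "tf n a b p \<ge> 0" using assms by (intro tf_nonneg) auto
    have "tf n x y p \<le> exp (- fst p * (x - a) - snd p * (y - b)) * tf n a b p"
      by (rule tf_mono[OF assms(2-5)])
    also have "\<dots> \<le> 1 * tf n a b p"
      by (rule mult_right_mono[OF e t])
    finally show ?thesis by simp
  next
    case False
    then show ?thesis unfolding tf_def by simp
  qed
qed



definition Hv :: "real \<Rightarrow> real \<Rightarrow> (real \<times> real) set" where
  "Hv \<alpha> c = {p. \<alpha> * (c - 1) / 24 \<le> fst p \<and> \<alpha> * (c - 1) / 24 \<le> snd p}"

lemma Wf_split:
  assumes "is_CFT c n" "x > 0" "y > 0"
  shows "Wf n x y = infsum (tf n x y) (Hv \<alpha> c) + infsum (tf n x y) (- Hv \<alpha> c)"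
proof -
  have "infsum (tf n x y) (Hv \<alpha> c \<union> - Hv \<alpha> c) = infsum (tf n x y) (Hv \<alpha> c) + infsum (tf n x y) (- Hv \<alpha> c)"
    by (rule infsum_Un_disjoint) (auto intro: tf_summable_on[OF assms])
  then show ?thesis unfolding Wf_def by simp
qed

lemma heavy_bound:
  assumes "is_CFT c n" "0 < a" "a \<le> x" "0 < b" "b \<le> y"
  shows "infsum (tf n x y) (Hv \<alpha> c) \<le> exp (- (\<alpha> * (c - 1) / 24) * (x + y - a - b)) * Wf n a b"
proof -
  define q where "q = \<alpha> * (c - 1) / 24"
  define E where "E = exp (- q * (x + y - a - b))"
  have xy: "x > 0" "y > 0" using assms by auto
  have "infsum (tf n x y) (Hv \<alpha> c) \<le> infsum (\<lambda>p. E * tf n a b p) (Hv \<alpha> c)"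
  proof (rule infsum_mono)
    show "tf n x y summable_on Hv \<alpha> c" by (rule tf_summable_on[OF assms(1) xy])
    show "(\<lambda>p. E * tf n a b p) summable_on Hv \<alpha> c"
      by (rule summable_on_cmult_right, rule tf_summable_on) (use assms in auto)
    fix p assume p: "p \<in> Hv \<alpha> c"
    then have h: "q \<le> fst p" "q \<le> snd p" unfolding Hv_def q_def by auto
    have "(fst p - q) * (x - a) \<ge> 0" "(snd p - q) * (y - b) \<ge> 0"
      using h assms by (simp_all add: mult_nonneg_nonneg)
    then have "- fst p * (x - a) - snd p * (y - b) \<le> - q * (x + y - a - b)"
      by (simp add: algebra_simps)
    then have e: "exp (- fst p * (x - a) - snd p * (y - b)) \<le> E"
      unfolding E_def by simp
    have "tf n x y p \<le> exp (- fst p * (x - a) - snd p * (y - b)) * tf n a b p"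
      by (rule tf_mono[OF assms(2-5)])
    also have "\<dots> \<le> E * tf n a b p"
      by (rule mult_right_mono[OF e tf_nonneg]) (use assms in auto)
    finally show "tf n x y p \<le> E * tf n a b p" .
  qed
  also have "\<dots> = E * infsum (tf n a b) (Hv \<alpha> c)" by (rule infsum_cmult_right')
  also have "\<dots> \<le> E * Wf n a b" unfolding Wf_def
    by (rule mult_left_mono, rule infsum_mono2) (auto simp: E_def intro: tf_summable_on[OF assms(1)] tf_nonneg assms)
  finally show ?thesis unfolding E_def q_def .
qed



lemma light_bound:
  assumes cft: "is_CFT c n" and xy: "x > 0" "y > 0"
  shows "infsum (tf n x y) (- Hv \<alpha> c) \<le> ZtildeL \<alpha> c n x y / (Pr x * Pr y)"
proof -
  define u where "u p = real (n p) * ch (fst p) x * ch (snd p) y" for p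
  define q where "q = \<alpha> * (c - 1) / 24"
  define V where "V = {(0::real, 0::real)}"
  define M where "M = {p::real\<times>real. 0 < min (fst p) (snd p) \<and> min (fst p) (snd p) < \<alpha> * (c - 1) / 24}"
  define JX where "JX = (\<lambda>J::nat. (real J, 0::real)) ` {1..}"
  define JY where "JY = (\<lambda>J::nat. (0::real, real J)) ` {1..}"
  have PP: "Pr x * Pr y > 0" using Pr_pos xy by simp
  have tfu: "tf n x y p = inverse (Pr x * Pr y) * u p" for p
    unfolding tf_def u_def g_def by (simp add: field_simps)
  have u_nonneg: "u p \<ge> 0" for p unfolding u_def using ch_pos xy by (simp add: less_imp_le)
  have usum: "u summable_on S" for S
  proof -
    have "(\<lambda>p. (Pr x * Pr y) * tf n x y p) summable_on S"
      by (rule summable_on_cmult_right, rule tf_summable_on[OF cft xy])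
    moreover have "(\<lambda>p. (Pr x * Pr y) * tf n x y p) = u" using Pr_pos[OF xy(1)] Pr_pos[OF xy(2)] by (simp add: tfu fun_eq_iff field_simps)
    ultimately show ?thesis by simp
  qed
  have sup: "\<forall>p. n p > 0 \<longrightarrow> fst p \<ge> 0 \<and> snd p \<ge> 0" using cft unfolding is_CFT_def by blast
  have zer: "\<forall>h hb. n (h, hb) > 0 \<and> (h = 0 \<or> hb = 0) \<and> (h, hb) \<noteq> (0, 0) \<longrightarrow>
        (hb = 0 \<and> (\<exists>J::nat. J \<ge> 1 \<and> h = real J)) \<or>
        (h = 0 \<and> (\<exists>J::nat. J \<ge> 1 \<and> hb = real J))" using cft unfolding is_CFT_def by blast
  have n0: "n (0,0) = 1" using cft unfolding is_CFT_def by blast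
  have step1: "infsum u (- Hv \<alpha> c) \<le> infsum u (V \<union> M \<union> JX \<union> JY)"
  proof (rule infsum_mono_neutral[OF usum usum])
    fix p assume p: "p \<in> - Hv \<alpha> c - (V \<union> M \<union> JX \<union> JY)"
    have "n p = 0"
    proof (rule ccontr)
      assume "n p \<noteq> 0"
      then have np: "n p > 0" by simp
      obtain h hb where pe: "p = (h, hb)" by (cases p)
      have nn: "h \<ge> 0" "hb \<ge> 0" using sup np pe by auto
      have lt: "min h hb < \<alpha> * (c - 1) / 24" using p pe unfolding Hv_def by auto
      show False
      proof (cases "min h hb > 0")
        case True
        then have "p \<in> M" using lt pe unfolding M_def by simp
        then show False using p by simp
      next
        case False
        then have z: "h = 0 \<or> hb = 0" using nn by linarith
        show False
        proof (cases "(h, hb) = (0, 0)")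
          case True then show False using p pe unfolding V_def by simp
        next
          case False
          then have "(hb = 0 \<and> (\<exists>J::nat. J \<ge> 1 \<and> h = real J)) \<or>
                     (h = 0 \<and> (\<exists>J::nat. J \<ge> 1 \<and> hb = real J))"
            using zer np pe z by auto
          then have "p \<in> JX \<or> p \<in> JY" unfolding JX_def JY_def pe by auto
          then show False using p by auto
        qed
      qed
    qed
    then show "u p \<le> 0" unfolding u_def by simp
  qed (auto intro: u_nonneg)
  have d1: "V \<inter> M = {}" unfolding V_def M_def by auto
  have d2: "(V \<union> M) \<inter> JX = {}" unfolding V_def M_def JX_def by auto
  have d3: "(V \<union> M \<union> JX) \<inter> JY = {}" unfolding V_def M_def JX_def JY_def by auto
  have step2: "infsum u (V \<union> M \<union> JX \<union> JY) = infsum u V + infsum u M + infsum u JX + infsum u JY"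
    by (simp add: infsum_Un_disjoint[OF usum usum] d1 d2 d3 summable_on_Un_disjoint[OF usum usum])
  have eV: "infsum u V = (1 - exp (-x)) * (1 - exp (-y))"
    unfolding V_def u_def ch_def using n0 by simp
  have eM: "infsum u M = (\<Sum>\<^sub>\<infinity>p\<in>M. real (n p) * exp (- fst p * x - snd p * y))"
  proof (rule infsum_cong)
    fix p assume "p \<in> M"
    then have "fst p \<noteq> 0" "snd p \<noteq> 0" unfolding M_def by auto
    then show "u p = real (n p) * exp (- fst p * x - snd p * y)"
      unfolding u_def ch_def by (simp add: exp_diff exp_minus field_simps)
  qed
  have injX: "inj_on (\<lambda>J::nat. (real J, 0::real)) {1..}" by (auto simp: inj_on_def)
  have injY: "inj_on (\<lambda>J::nat. (0::real, real J)) {1..}" by (auto simp: inj_on_def)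
  have eX: "infsum u JX = (\<Sum>\<^sub>\<infinity>J\<in>{1::nat..}. real (n (real J, 0)) * exp (- real J * x) * (1 - exp (-y)))"
    unfolding JX_def infsum_reindex[OF injX]
    by (rule infsum_cong) (auto simp: u_def ch_def)
  have eY: "infsum u JY = (\<Sum>\<^sub>\<infinity>J\<in>{1::nat..}. real (n (0, real J)) * (1 - exp (-x)) * exp (- real J * y))"
    unfolding JY_def infsum_reindex[OF injY]
    by (rule infsum_cong) (auto simp: u_def ch_def)
  have "infsum u V + infsum u M + infsum u JX + infsum u JY = ZtildeL \<alpha> c n x y"
    unfolding eV eM eX eY unfolding ZtildeL_def M_def by simp
  then have "infsum u (- Hv \<alpha> c) \<le> ZtildeL \<alpha> c n x y"
    using step1 step2 by simp
  moreover have "infsum (tf n x y) (- Hv \<alpha> c) = inverse (Pr x * Pr y) * infsum u (- Hv \<alpha> c)"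
    unfolding tfu by (rule infsum_cmult_right')
  moreover have "inverse (Pr x * Pr y) * infsum u (- Hv \<alpha> c) \<le> inverse (Pr x * Pr y) * ZtildeL \<alpha> c n x y"
    by (rule mult_left_mono) (use calculation(1) PP in \<open>auto simp del: inverse_mult_distrib\<close>)
  ultimately show ?thesis by (simp add: divide_inverse mult.commute)
qed



lemma diag_bound:
  assumes cl: "in_class \<alpha> \<epsilon> A B c n" and sg: "\<sigma> > 2*pi" and ep: "\<epsilon> > 0"
  shows "Wf n \<sigma> \<sigma> \<le> A \<sigma> / (Pr \<sigma> * Pr \<sigma> * (1 - exp (- \<epsilon> * (\<sigma> - 4*pi^2/\<sigma>))))"
proof -
  have cft: "is_CFT c n" using cl unfolding in_class_def by blast
  have Abd: "(\<Sum>\<^sub>\<infinity>p\<in>{p. fst p + snd p \<le> c / 12 + \<epsilon>}. real (n p) * exp (- (fst p + snd p) * \<sigma>)) \<le> A \<sigma>"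
    using cl sg unfolding in_class_def by blast
  define s' where "s' = 4*pi^2/\<sigma>"
  have spos: "\<sigma> > 0" using sg pi_gt_zero by linarith
  have s'pos: "s' > 0" unfolding s'_def using spos by simp
  have s'lt: "s' < \<sigma>"
  proof -
    have "(2*pi)*(2*pi) < \<sigma> * \<sigma>" using mult_strict_mono[OF sg sg] pi_gt_zero spos by simp
    then have "4*pi^2 < \<sigma> * \<sigma>" by (simp add: power2_eq_square algebra_simps)
    then show ?thesis unfolding s'_def using spos by (simp add: divide_less_eq)
  qed
  define d where "d = \<sigma> - s'"
  have dpos: "d > 0" unfolding d_def using s'lt by simp
  define AL where "AL = {p::real\<times>real. fst p + snd p \<le> c / 12 + \<epsilon>}"
  define v where "v p = real (n p) * exp (- (fst p + snd p) * \<sigma>)" for p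
  have PP: "Pr \<sigma> * Pr \<sigma> > 0" using Pr_pos[OF spos] by simp
  have e1: "1 - exp (-\<sigma>) > 0" using spos by simp
  have split: "Wf n z z = infsum (tf n z z) AL + infsum (tf n z z) (- AL)" if "z > 0" for z
  proof -
    have "infsum (tf n z z) (AL \<union> - AL) = infsum (tf n z z) AL + infsum (tf n z z) (- AL)"
      by (rule infsum_Un_disjoint) (auto intro: tf_summable_on[OF cft] that)
    then show ?thesis unfolding Wf_def by simp
  qed
  have vsum: "v summable_on AL"
  proof (rule summable_on_comparison_test)
    show "(\<lambda>p. inverse ((1 - exp (-\<sigma>))^2) * ((Pr \<sigma> * Pr \<sigma>) * tf n \<sigma> \<sigma> p)) summable_on AL"
      by (intro summable_on_cmult_right tf_summable_on[OF cft spos spos])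
    fix p assume "p \<in> AL"
    have c1: "(1 - exp (-\<sigma>)) * exp (- fst p * \<sigma>) \<le> ch (fst p) \<sigma>" by (rule ch_ge[OF spos])
    have c2: "(1 - exp (-\<sigma>)) * exp (- snd p * \<sigma>) \<le> ch (snd p) \<sigma>" by (rule ch_ge[OF spos])
    have "((1 - exp (-\<sigma>)) * exp (- fst p * \<sigma>)) * ((1 - exp (-\<sigma>)) * exp (- snd p * \<sigma>)) \<le> ch (fst p) \<sigma> * ch (snd p) \<sigma>"
      by (rule mult_mono[OF c1 c2]) (use e1 ch_pos[OF spos] in \<open>auto simp: less_imp_le\<close>)
    then have "real (n p) * (((1 - exp (-\<sigma>)) * exp (- fst p * \<sigma>)) * ((1 - exp (-\<sigma>)) * exp (- snd p * \<sigma>))) \<le> real (n p) * (ch (fst p) \<sigma> * ch (snd p) \<sigma>)"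
      by (rule mult_left_mono) simp
    moreover have "(Pr \<sigma> * Pr \<sigma>) * tf n \<sigma> \<sigma> p = real (n p) * (ch (fst p) \<sigma> * ch (snd p) \<sigma>)"
      unfolding tf_def g_def using Pr_pos[OF spos] by (simp add: field_simps)
    moreover have "real (n p) * (((1 - exp (-\<sigma>)) * exp (- fst p * \<sigma>)) * ((1 - exp (-\<sigma>)) * exp (- snd p * \<sigma>))) = (1 - exp (-\<sigma>))^2 * v p"
      unfolding v_def by (simp add: power2_eq_square exp_add[symmetric] algebra_simps)
    ultimately have "(1 - exp (-\<sigma>))^2 * v p \<le> (Pr \<sigma> * Pr \<sigma>) * tf n \<sigma> \<sigma> p" by simp
    then show "v p \<le> inverse ((1 - exp (-\<sigma>))^2) * ((Pr \<sigma> * Pr \<sigma>) * tf n \<sigma> \<sigma> p)"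
      using e1 by (simp add: field_simps)
    show "0 \<le> v p" unfolding v_def by simp
  qed
  have Wa: "infsum (tf n \<sigma> \<sigma>) AL \<le> A \<sigma> / (Pr \<sigma> * Pr \<sigma>)"
  proof -
    have "infsum (tf n \<sigma> \<sigma>) AL \<le> infsum (\<lambda>p. inverse (Pr \<sigma> * Pr \<sigma>) * v p) AL"
    proof (rule infsum_mono)
      show "tf n \<sigma> \<sigma> summable_on AL" by (rule tf_summable_on[OF cft spos spos])
      show "(\<lambda>p. inverse (Pr \<sigma> * Pr \<sigma>) * v p) summable_on AL" by (rule summable_on_cmult_right[OF vsum])
      fix p :: "real \<times> real"
      have c1: "ch (fst p) \<sigma> \<le> exp (- fst p * \<sigma>)" by (rule ch_le[OF spos])
      have c2: "ch (snd p) \<sigma> \<le> exp (- snd p * \<sigma>)" by (rule ch_le[OF spos])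
      have "ch (fst p) \<sigma> * ch (snd p) \<sigma> \<le> exp (- fst p * \<sigma>) * exp (- snd p * \<sigma>)"
        by (rule mult_mono[OF c1 c2]) (use ch_pos[OF spos] in \<open>auto simp: less_imp_le\<close>)
      then have "real (n p) * (ch (fst p) \<sigma> * ch (snd p) \<sigma>) \<le> real (n p) * (exp (- fst p * \<sigma>) * exp (- snd p * \<sigma>))"
        by (rule mult_left_mono) simp
      then have "inverse (Pr \<sigma> * Pr \<sigma>) * (real (n p) * (ch (fst p) \<sigma> * ch (snd p) \<sigma>)) \<le> inverse (Pr \<sigma> * Pr \<sigma>) * (real (n p) * (exp (- fst p * \<sigma>) * exp (- snd p * \<sigma>)))"
        by (rule mult_left_mono) (use PP in \<open>simp del: inverse_mult_distrib\<close>)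
      moreover have "tf n \<sigma> \<sigma> p = inverse (Pr \<sigma> * Pr \<sigma>) * (real (n p) * (ch (fst p) \<sigma> * ch (snd p) \<sigma>))"
        unfolding tf_def g_def by (simp add: field_simps)
      moreover have "v p = real (n p) * (exp (- fst p * \<sigma>) * exp (- snd p * \<sigma>))"
        unfolding v_def by (simp add: exp_add[symmetric] algebra_simps)
      ultimately show "tf n \<sigma> \<sigma> p \<le> inverse (Pr \<sigma> * Pr \<sigma>) * v p" by simp
    qed
    also have "\<dots> = inverse (Pr \<sigma> * Pr \<sigma>) * infsum v AL" by (rule infsum_cmult_right')
    also have "\<dots> \<le> inverse (Pr \<sigma> * Pr \<sigma>) * A \<sigma>"
    proof (rule mult_left_mono)
      have "v = (\<lambda>p. real (n p) * exp (- (fst p + snd p) * \<sigma>))" unfolding v_def by (rule refl)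
      then show "infsum v AL \<le> A \<sigma>" using Abd unfolding AL_def by simp
    qed (use PP in \<open>simp del: inverse_mult_distrib\<close>)
    finally show ?thesis by (simp add: divide_inverse mult.commute)
  qed
  define \<rho> where "\<rho> = exp (- \<epsilon> * d)"
  have rho: "\<rho> < 1" "\<rho> > 0" unfolding \<rho>_def using ep dpos by (simp_all add: mult_pos_pos)
  define Eb where "Eb = exp (c / 12 * d)"
  have Ebpos: "Eb > 0" unfolding Eb_def by simp
  have Wb: "infsum (tf n \<sigma> \<sigma>) (- AL) \<le> exp (- (c / 12 + \<epsilon>) * d) * infsum (tf n s' s') (- AL)"
  proof -
    have "infsum (tf n \<sigma> \<sigma>) (- AL) \<le> infsum (\<lambda>p. exp (- (c / 12 + \<epsilon>) * d) * tf n s' s' p) (- AL)"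
    proof (rule infsum_mono)
      show "tf n \<sigma> \<sigma> summable_on (- AL)" by (rule tf_summable_on[OF cft spos spos])
      show "(\<lambda>p. exp (- (c / 12 + \<epsilon>) * d) * tf n s' s' p) summable_on (- AL)"
        by (intro summable_on_cmult_right tf_summable_on[OF cft s'pos s'pos])
      fix p assume "p \<in> - AL"
      then have h: "fst p + snd p > c / 12 + \<epsilon>" unfolding AL_def by auto
      have "(fst p + snd p - (c / 12 + \<epsilon>)) * d \<ge> 0" using h dpos by simp
      then have "- fst p * (\<sigma> - s') - snd p * (\<sigma> - s') \<le> - (c / 12 + \<epsilon>) * d"
        unfolding d_def by (simp add: algebra_simps)
      then have e: "exp (- fst p * (\<sigma> - s') - snd p * (\<sigma> - s')) \<le> exp (- (c / 12 + \<epsilon>) * d)" by simp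
      have "tf n \<sigma> \<sigma> p \<le> exp (- fst p * (\<sigma> - s') - snd p * (\<sigma> - s')) * tf n s' s' p"
        by (rule tf_mono) (use s'pos s'lt in auto)
      also have "\<dots> \<le> exp (- (c / 12 + \<epsilon>) * d) * tf n s' s' p"
        by (rule mult_right_mono[OF e tf_nonneg[OF s'pos s'pos]])
      finally show "tf n \<sigma> \<sigma> p \<le> exp (- (c / 12 + \<epsilon>) * d) * tf n s' s' p" .
    qed
    also have "\<dots> = exp (- (c / 12 + \<epsilon>) * d) * infsum (tf n s' s') (- AL)" by (rule infsum_cmult_right')
    finally show ?thesis .
  qed
  have modu: "Wf n s' s' = Eb * Wf n \<sigma> \<sigma>"
  proof -
    have m1: "Wf n \<sigma> \<sigma> = exp (c / 24 * (s' + s' - \<sigma> - \<sigma>)) * Wf n s' s'"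
      using Wf_modular[OF cft spos spos] unfolding s'_def .
    have m2: "exp (c / 24 * (s' + s' - \<sigma> - \<sigma>)) * Eb = 1"
    proof -
      have "c / 24 * (s' + s' - \<sigma> - \<sigma>) + c / 12 * (\<sigma> - s') = 0" by (simp add: field_simps)
      then show ?thesis unfolding Eb_def d_def by (simp add: exp_add[symmetric])
    qed
    have "Eb * Wf n \<sigma> \<sigma> = Eb * (exp (c / 24 * (s' + s' - \<sigma> - \<sigma>)) * Wf n s' s')"
      using m1 by (rule arg_cong)
    also have "\<dots> = (exp (c / 24 * (s' + s' - \<sigma> - \<sigma>)) * Eb) * Wf n s' s'"
      by (simp only: mult_ac)
    also have "\<dots> = Wf n s' s'" by (simp only: m2 mult_1)
    finally show ?thesis by (rule sym)
  qed
  have Was': "infsum (tf n s' s') AL \<ge> 0" by (rule infsum_nonneg) (rule tf_nonneg[OF s'pos s'pos])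
  have Wbs': "infsum (tf n s' s') (- AL) \<le> Eb * Wf n \<sigma> \<sigma>"
    using split[OF s'pos] modu Was' by simp
  have "exp (- (c / 12 + \<epsilon>) * d) * Eb = \<rho>"
    unfolding Eb_def \<rho>_def by (simp add: exp_add[symmetric] algebra_simps)
  have "infsum (tf n \<sigma> \<sigma>) (- AL) \<le> exp (- (c / 12 + \<epsilon>) * d) * (Eb * Wf n \<sigma> \<sigma>)"
    using order_trans[OF Wb mult_left_mono[OF Wbs', of "exp (- (c / 12 + \<epsilon>) * d)"]] by simp
  also have "\<dots> = \<rho> * Wf n \<sigma> \<sigma>" using \<open>exp (- (c / 12 + \<epsilon>) * d) * Eb = \<rho>\<close> by (simp add: mult.assoc[symmetric])
  finally have "Wf n \<sigma> \<sigma> \<le> infsum (tf n \<sigma> \<sigma>) AL + \<rho> * Wf n \<sigma> \<sigma>" using split[OF spos] by simp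
  then have "(1 - \<rho>) * Wf n \<sigma> \<sigma> \<le> A \<sigma> / (Pr \<sigma> * Pr \<sigma>)" using Wa by (simp add: algebra_simps)
  then have "Wf n \<sigma> \<sigma> \<le> A \<sigma> / (Pr \<sigma> * Pr \<sigma>) / (1 - \<rho>)" using rho by (subst pos_le_divide_eq) (simp_all add: mult.commute)
  then show ?thesis unfolding \<rho>_def d_def s'_def by (simp only: divide_divide_eq_left)
qed



definition good :: "real \<Rightarrow> real \<Rightarrow> (real \<Rightarrow> real) \<Rightarrow> (real \<Rightarrow> real \<Rightarrow> real) \<Rightarrow> real \<Rightarrow> real \<Rightarrow> bool" where
  "good \<alpha> \<epsilon> A B x y \<longleftrightarrow> (\<exists>K. \<forall>c n. in_class \<alpha> \<epsilon> A B c n \<longrightarrow> Wf n x y \<le> K)"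

definition psi :: "real \<Rightarrow> real \<Rightarrow> real" where
  "psi \<alpha> t = t - (1 - \<alpha>) * (4 * pi^2 / t)"

lemma good_base:
  assumes "\<epsilon> > 0" "x > 2*pi" "y > 2*pi"
  shows "good \<alpha> \<epsilon> A B x y"
proof -
  define m where "m = min x y"
  have m: "m > 2*pi" "m \<le> x" "m \<le> y" unfolding m_def using assms by auto
  have mpos: "m > 0" using m(1) pi_gt_zero by linarith
  show ?thesis unfolding good_def
  proof (intro exI allI impI)
    fix c n assume cl: "in_class \<alpha> \<epsilon> A B c n"
    have cft: "is_CFT c n" using cl unfolding in_class_def by blast
    have "Wf n x y \<le> Wf n m m" by (rule Wf_mono[OF cft mpos m(2) mpos m(3)])
    also have "\<dots> \<le> A m / (Pr m * Pr m * (1 - exp (- \<epsilon> * (m - 4*pi^2/m))))"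
      by (rule diag_bound[OF cl m(1) assms(1)])
    finally show "Wf n x y \<le> A m / (Pr m * Pr m * (1 - exp (- \<epsilon> * (m - 4*pi^2/m))))" .
  qed
qed

lemma good_rule:
  assumes al: "0 \<le> \<alpha>" and pos: "x > 0" "y > 0" "p > 0" "q > 0"
    and le: "4*pi^2/p \<le> x" "4*pi^2/q \<le> y" and hyp: "x * y > 4*pi^2"
    and g: "good \<alpha> \<epsilon> A B p q" and ineq: "\<alpha> * (x + y) > psi \<alpha> p + psi \<alpha> q"
  shows "good \<alpha> \<epsilon> A B x y"
proof -
  obtain K where K: "\<And>c n. in_class \<alpha> \<epsilon> A B c n \<Longrightarrow> Wf n p q \<le> K" using g unfolding good_def by blast
  define a where "a = 4*pi^2/p"
  define b where "b = 4*pi^2/q"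
  have apos: "a > 0" "b > 0" unfolding a_def b_def using pos by auto
  have ap: "4*pi^2/a = p" "4*pi^2/b = q" unfolding a_def b_def using pos by auto
  define D where "D = x + y - a - b"
  have e1: "psi \<alpha> p = p - (1 - \<alpha>) * a" unfolding psi_def a_def ..
  have e2: "psi \<alpha> q = q - (1 - \<alpha>) * b" unfolding psi_def b_def ..
  have key: "\<alpha> * D > p + q - a - b"
    using ineq unfolding e1 e2 D_def by (simp add: algebra_simps)
  show ?thesis unfolding good_def
  proof (intro exI allI impI)
    fix c n assume cl: "in_class \<alpha> \<epsilon> A B c n"
    have cft: "is_CFT c n" using cl unfolding in_class_def by blast
    have c1: "c > 1" using cft unfolding is_CFT_def by blast
    have Bb: "ZtildeL \<alpha> c n x y \<le> B x y" using cl pos hyp unfolding in_class_def by blast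
    have PP: "Pr x * Pr y > 0" using Pr_pos pos by simp
    have L: "infsum (tf n x y) (- Hv \<alpha> c) \<le> B x y / (Pr x * Pr y)"
      using light_bound[OF cft pos(1,2), of \<alpha>] Bb PP by (smt (verit) divide_right_mono)
    have H: "infsum (tf n x y) (Hv \<alpha> c) \<le> exp (- (\<alpha> * (c - 1) / 24) * (x + y - a - b)) * Wf n a b"
      by (rule heavy_bound[OF cft apos(1) _ apos(2)]) (use le in \<open>simp_all add: a_def b_def\<close>)
    have M: "Wf n a b = exp (c / 24 * (p + q - a - b)) * Wf n p q"
      using Wf_modular[OF cft apos] unfolding ap .
    have expo: "- (\<alpha> * (c - 1) / 24) * D + c / 24 * (p + q - a - b) \<le> \<alpha> * D / 24"
    proof -
      have "- (\<alpha> * (c - 1) / 24) * D + c / 24 * (p + q - a - b) = - (c / 24) * (\<alpha> * D - (p + q - a - b)) + \<alpha> * D / 24"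
        by (simp add: field_simps)
      moreover have "(c / 24) * (\<alpha> * D - (p + q - a - b)) \<ge> 0" using key c1 by simp
      ultimately show ?thesis by linarith
    qed
    have W0: "Wf n p q \<ge> 0" by (rule Wf_nonneg[OF pos(3,4)])
    have "exp (- (\<alpha> * (c - 1) / 24) * (x + y - a - b)) * Wf n a b
          = exp (- (\<alpha> * (c - 1) / 24) * D) * (exp (c / 24 * (p + q - a - b)) * Wf n p q)"
      unfolding M D_def ..
    also have "\<dots> = exp (- (\<alpha> * (c - 1) / 24) * D + c / 24 * (p + q - a - b)) * Wf n p q"
      by (simp only: exp_add mult.assoc)
    also have "\<dots> \<le> exp (\<alpha> * D / 24) * Wf n p q"
      by (rule mult_right_mono[OF _ W0]) (use expo in simp)
    also have "\<dots> \<le> exp (\<alpha> * D / 24) * max K 0"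
      by (rule mult_left_mono) (use K[OF cl] in auto)
    finally have H2: "infsum (tf n x y) (Hv \<alpha> c) \<le> exp (\<alpha> * D / 24) * max K 0" using H by simp
    have "Wf n x y = infsum (tf n x y) (Hv \<alpha> c) + infsum (tf n x y) (- Hv \<alpha> c)"
      by (rule Wf_split[OF cft pos(1,2)])
    then show "Wf n x y \<le> B x y / (Pr x * Pr y) + exp (\<alpha> * D / 24) * max K 0"
      using H2 L by simp
  qed
qed

lemma psi_shift:
  assumes "0 \<le> \<alpha>" "\<alpha> \<le> 1" "P \<ge> 2*pi" "\<delta> > 0"
  shows "psi \<alpha> (P + \<delta>) \<le> psi \<alpha> P + 2 * \<delta>"
proof -
  have Ppos: "P > 0" using assms(3) pi_gt_zero by linarith
  have "4*pi^2/P - 4*pi^2/(P+\<delta>) = 4*pi^2 * \<delta> / (P * (P + \<delta>))"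
    using Ppos assms(4) by (simp add: field_simps)
  also have "\<dots> \<le> \<delta>"
  proof -
    have "(2*pi)*(2*pi) \<le> P * (P + \<delta>)"
      using mult_mono[of "2*pi" P "2*pi" "P+\<delta>"] assms Ppos pi_gt_zero by auto
    then have "4*pi^2 \<le> P * (P + \<delta>)" by (simp add: power2_eq_square)
    then have "4*pi^2 * \<delta> \<le> \<delta> * (P * (P + \<delta>))" using assms(4) by simp
    then show ?thesis using Ppos assms(4) by (simp add: pos_divide_le_eq)
  qed
  finally have d: "4*pi^2/P - 4*pi^2/(P+\<delta>) \<le> \<delta>" .
  have "(1 - \<alpha>) * (4*pi^2/P - 4*pi^2/(P+\<delta>)) \<le> 1 * \<delta>"
  proof (rule mult_mono)
    show "0 \<le> 4*pi^2/P - 4*pi^2/(P+\<delta>)" using Ppos assms(4) by (simp add: frac_le)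
  qed (use assms d in auto)
  then show ?thesis unfolding psi_def by (simp add: algebra_simps)
qed

lemma good_caseA:
  assumes al: "0 < \<alpha>" "\<alpha> \<le> 1" and ep: "\<epsilon> > 0" and pos: "x > 0" "y > 0" and hyp: "x * y > 4*pi^2"
    and ineq: "\<alpha> * (x + y) > psi \<alpha> (max (2*pi) (4*pi^2/x)) + psi \<alpha> (max (2*pi) (4*pi^2/y))"
  shows "good \<alpha> \<epsilon> A B x y"
proof -
  define P where "P = max (2*pi) (4*pi^2/x)"
  define Q where "Q = max (2*pi) (4*pi^2/y)"
  define \<delta> where "\<delta> = (\<alpha> * (x + y) - psi \<alpha> P - psi \<alpha> Q) / 5"
  have dpos: "\<delta> > 0" unfolding \<delta>_def P_def Q_def using ineq by simp
  have sP: "psi \<alpha> (P + \<delta>) \<le> psi \<alpha> P + 2 * \<delta>" by (rule psi_shift) (use al dpos in \<open>auto simp: P_def\<close>)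
  have sQ: "psi \<alpha> (Q + \<delta>) \<le> psi \<alpha> Q + 2 * \<delta>" by (rule psi_shift) (use al dpos in \<open>auto simp: Q_def\<close>)
  have pP: "P + \<delta> > 2*pi" "Q + \<delta> > 2*pi" unfolding P_def Q_def using dpos by auto
  have ppos: "P + \<delta> > 0" "Q + \<delta> > 0" using pP pi_gt_zero by linarith+
  show ?thesis
  proof (rule good_rule[OF _ pos ppos _ _ hyp good_base[OF ep pP]])
    show "0 \<le> \<alpha>" using al by simp
    show "4*pi^2/(P+\<delta>) \<le> x"
    proof -
      have "4*pi^2/x \<le> P + \<delta>" unfolding P_def using dpos by auto
      then show ?thesis using pos ppos by (simp add: divide_le_eq mult.commute)
    qed
    show "4*pi^2/(Q+\<delta>) \<le> y"
    proof -
      have "4*pi^2/y \<le> Q + \<delta>" unfolding Q_def using dpos by auto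
      then show ?thesis using pos ppos by (simp add: divide_le_eq mult.commute)
    qed
    show "\<alpha> * (x + y) > psi \<alpha> (P + \<delta>) + psi \<alpha> (Q + \<delta>)"
    proof -
      have "5 * \<delta> = \<alpha> * (x + y) - psi \<alpha> P - psi \<alpha> Q" unfolding \<delta>_def by simp
      then show ?thesis using sP sQ dpos unfolding P_def Q_def by linarith
    qed
  qed
qed



lemma psi_strict:
  assumes "\<alpha> \<le> 1" "0 < s" "s < t"
  shows "psi \<alpha> s < psi \<alpha> t"
proof -
  have "4*pi^2/t \<le> 4*pi^2/s" using assms by (simp add: frac_le)
  then have "(1 - \<alpha>) * (4*pi^2/t) \<le> (1 - \<alpha>) * (4*pi^2/s)" by (rule mult_left_mono) (use assms in simp)
  then show ?thesis unfolding psi_def using assms by linarith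
qed

lemma psi_inv:
  assumes "\<alpha> \<le> 1" "0 < \<alpha>" "cc > 0 \<or> \<alpha> < 1"
  defines "w \<equiv> (cc + sqrt (cc^2 + 16*pi^2*(1-\<alpha>))) / 2"
  shows "w > 0" "psi \<alpha> w = cc"
proof -
  define s where "s = sqrt (cc^2 + 16*pi^2*(1-\<alpha>))"
  have rad: "cc^2 + 16*pi^2*(1-\<alpha>) \<ge> 0" 
  proof -
    have "16*pi^2*(1-\<alpha>) \<ge> 0" using assms by simp
    moreover have "cc^2 \<ge> 0" by simp
    ultimately show ?thesis by linarith
  qed
  have s2: "s^2 = cc^2 + 16*pi^2*(1-\<alpha>)" unfolding s_def by (rule real_sqrt_pow2[OF rad])
  have s0: "s \<ge> 0" unfolding s_def using rad by simp
  have sgt: "s > - cc"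
  proof (cases "cc > 0")
    case True then show ?thesis using s0 by linarith
  next
    case False
    then have a1: "\<alpha> < 1" using assms by blast
    have "s^2 > cc^2" using s2 a1 pi_gt_zero by simp
    show ?thesis
    proof (rule ccontr)
      assume "\<not> s > - cc"
      then have "s \<le> - cc" by simp
      then have "s * s \<le> (- cc) * (- cc)" using s0 by (intro mult_mono) auto
      then show False using \<open>s^2 > cc^2\<close> by (simp add: power2_eq_square)
    qed
  qed
  have w: "w = (cc + s) / 2" unfolding w_def s_def ..
  show wpos: "w > 0" unfolding w using sgt by simp
  have "w * w - cc * w = 4*pi^2*(1-\<alpha>)"
  proof -
    have "w * w - cc * w = (s^2 - cc^2) / 4" unfolding w by (simp add: power2_eq_square field_simps)
    then show ?thesis using s2 by simp
  qed
  then have "w - (1 - \<alpha>) * (4*pi^2/w) = cc" using wpos by (simp add: field_simps)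
  then show "psi \<alpha> w = cc" unfolding psi_def .
qed



lemma key_D1:
  assumes al: "0 < \<alpha>" "\<alpha> \<le> 1" and uw: "0 < u" "u < w" "w \<le> 2*pi"
    and hw: "psi \<alpha> w = psi \<alpha> u + D1 - e"
    and hF: "(1-\<alpha>)*(w - 4*pi^2/w) + \<alpha>*(w + 4*pi^2/u - 4*pi) = F - e"
  shows "\<alpha> * (4*pi^2/u - 4*pi^2/w) \<ge> min D1 F - e"
proof -
  define U where "U = 4*pi^2/u"
  define W where "W = 4*pi^2/w"
  have wpos: "w > 0" using uw by simp
  have uU: "u * U = 4*pi^2" unfolding U_def using uw by simp
  have wW: "w * W = 4*pi^2" unfolding W_def using wpos by simp
  show ?thesis
  proof (cases "w \<ge> 2*pi*(2*\<alpha>-1)")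
    case True
    define r where "r = (W - w) - 2*\<alpha>*(W - 2*pi)"
    have wr: "w * r = - ((w - 2*pi) * (w - 2*pi*(2*\<alpha>-1)))"
      unfolding r_def using wW by (simp add: algebra_simps power2_eq_square)
    have "(w - 2*pi) * (w - 2*pi*(2*\<alpha>-1)) \<le> 0"
      using True uw by (intro mult_nonpos_nonneg) auto
    then have "w * r \<ge> 0" using wr by simp
    then have r0: "r \<ge> 0" using wpos by (simp add: zero_le_mult_iff)
    have "\<alpha> * (U - W) = ((1-\<alpha>)*(w - W) + \<alpha>*(w + U - 4*pi)) + r"
      unfolding r_def by (simp add: algebra_simps)
    then have "\<alpha> * (U - W) = F - e + r" using hF unfolding U_def W_def by simp
    then show ?thesis using r0 unfolding U_def W_def by linarith
  next
    case False
    have a2: "2*\<alpha> - 1 > 0"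
    proof (rule ccontr)
      assume "\<not> 2*\<alpha> - 1 > 0"
      then have "2*pi*(2*\<alpha>-1) \<le> 0" using pi_gt_zero by (simp add: mult_nonneg_nonpos)
      then show False using False wpos by linarith
    qed
    have "u * w < w * w" using uw by simp
    also have "w * w < (2*pi*(2*\<alpha>-1)) * (2*pi*(2*\<alpha>-1))"
      using False wpos by (intro mult_strict_mono) auto
    also have "\<dots> = 4*pi^2 * ((2*\<alpha>-1) * (2*\<alpha>-1))" by (simp add: power2_eq_square algebra_simps)
    also have "\<dots> \<le> 4*pi^2 * (2*\<alpha>-1)"
      using a2 al by (intro mult_left_mono) (auto simp: mult_le_cancel_left1)
    finally have uwb: "u * w < 4*pi^2 * (2*\<alpha>-1)" .
    have UW: "(U - W) * (u * w) = 4*pi^2 * (w - u)"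
    proof -
      have "(U - W) * (u * w) = (u * U) * w - (w * W) * u" by (simp add: algebra_simps)
      then show ?thesis using uU wW by (simp add: algebra_simps)
    qed
    have "(u * w) * (w - u) \<le> (4*pi^2 * (2*\<alpha>-1)) * (w - u)"
      using uwb uw by (intro mult_right_mono) auto
    also have "\<dots> = (2*\<alpha>-1) * (4*pi^2 * (w - u))" by (simp add: algebra_simps)
    also have "\<dots> = (2*\<alpha>-1) * ((U - W) * (u * w))" using UW by simp
    also have "\<dots> = ((2*\<alpha>-1) * (U - W)) * (u * w)" by (simp only: mult_ac)
    finally have "(w - u) * (u * w) \<le> ((2*\<alpha>-1) * (U - W)) * (u * w)" by (simp add: algebra_simps)
    then have k: "w - u \<le> (2*\<alpha>-1) * (U - W)" using uw by (simp add: mult_le_cancel_right)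
    have "D1 - e = (w - u) + (1-\<alpha>) * (U - W)"
      using hw unfolding psi_def U_def W_def by (simp add: algebra_simps)
    then have "\<alpha> * (U - W) \<ge> D1 - e" using k by (simp add: algebra_simps)
    then show ?thesis unfolding U_def W_def by linarith
  qed
qed



lemma psi_2pi: "psi \<alpha> (2*pi) = 2*pi*\<alpha>"
  unfolding psi_def by (simp add: power2_eq_square field_simps)

lemma caseA_pair:
  assumes al: "0 < \<alpha>" "\<alpha> \<le> 1" and ep: "\<epsilon> > 0" and uv: "0 < u" "u \<le> 2*pi" "2*pi \<le> v"
    and D1: "\<alpha> * (v - 4*pi^2/u) > 0" and M: "u + \<alpha> * v - 4*pi^2/u > 2*pi*\<alpha>"
  shows "good \<alpha> \<epsilon> A B u v \<and> good \<alpha> \<epsilon> A B v u"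
proof -
  have vpos: "v > 0" using uv pi_gt_zero by linarith
  have vu: "v > 4*pi^2/u" using D1 al by (simp add: zero_less_mult_iff)
  then have hyp: "u * v > 4*pi^2" using uv by (simp add: divide_less_eq mult.commute)
  have U: "4*pi^2/u \<ge> 2*pi"
  proof -
    have "2*pi * u \<le> 2*pi * (2*pi)" using uv pi_gt_zero by (intro mult_left_mono) auto
    then have "2*pi * u \<le> 4*pi^2" by (simp add: power2_eq_square)
    then show ?thesis using uv by (simp add: le_divide_eq)
  qed
  have V: "4*pi^2/v \<le> 2*pi"
  proof -
    have "2*pi * (2*pi) \<le> 2*pi * v" using uv pi_gt_zero by (intro mult_left_mono) auto
    then have "4*pi^2 \<le> 2*pi * v" by (simp add: power2_eq_square)
    then show ?thesis using vpos by (simp add: divide_le_eq)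
  qed
  have m1: "max (2*pi) (4*pi^2/u) = 4*pi^2/u" using U by simp
  have m2: "max (2*pi) (4*pi^2/v) = 2*pi" using V by simp
  have pU: "psi \<alpha> (4*pi^2/u) = 4*pi^2/u - (1-\<alpha>) * u"
    unfolding psi_def using uv by simp
  have ineq: "\<alpha> * (u + v) > psi \<alpha> (4*pi^2/u) + psi \<alpha> (2*pi)"
    unfolding pU psi_2pi using M by (simp add: algebra_simps)
  have g1: "good \<alpha> \<epsilon> A B u v"
    by (rule good_caseA[OF al ep uv(1) vpos hyp]) (use ineq m1 m2 in simp)
  have g2: "good \<alpha> \<epsilon> A B v u"
    by (rule good_caseA[OF al ep vpos uv(1)]) (use ineq m1 m2 hyp in \<open>simp_all add: mult.commute add.commute\<close>)
  show ?thesis using g1 g2 by simp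
qed



lemma psi_less_imp:
  assumes "\<alpha> \<le> 1" "0 < t" "psi \<alpha> s < psi \<alpha> t"
  shows "s < t"
proof (rule ccontr)
  assume "\<not> s < t"
  then have "t \<le> s" by simp
  show False
  proof (cases "t = s")
    case True then show False using assms by simp
  next
    case False
    then have "t < s" using \<open>t \<le> s\<close> by simp
    then show False using psi_strict[OF assms(1) assms(2) \<open>t < s\<close>] assms by simp
  qed
qed

lemma claim:
  assumes al: "0 < \<alpha>" "\<alpha> \<le> 1" and ep: "\<epsilon> > 0" and de: "d > 0" "e > 0"
  shows "\<forall>u v. 0 < u \<and> u \<le> 2*pi \<and> 2*pi \<le> v \<and> \<alpha> * (v - 4*pi^2/u) \<ge> d + real N * e
     \<and> (1-\<alpha>)*(u - 4*pi^2/u) + \<alpha>*(u + v - 4*pi) \<ge> d + real N * e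
     \<and> psi \<alpha> u \<ge> 2*pi*\<alpha> - real N * d
     \<longrightarrow> good \<alpha> \<epsilon> A B u v \<and> good \<alpha> \<epsilon> A B v u"
proof (induction N)
  case 0
  show ?case
  proof (intro allI impI)
    fix u v assume h: "0 < u \<and> u \<le> 2*pi \<and> 2*pi \<le> v \<and> \<alpha> * (v - 4*pi^2/u) \<ge> d + real 0 * e
     \<and> (1-\<alpha>)*(u - 4*pi^2/u) + \<alpha>*(u + v - 4*pi) \<ge> d + real 0 * e
     \<and> psi \<alpha> u \<ge> 2*pi*\<alpha> - real 0 * d"
    have M: "u + \<alpha> * v - 4*pi^2/u = psi \<alpha> u + \<alpha> * (v - 4*pi^2/u)"
      unfolding psi_def by (simp only: left_diff_distrib right_diff_distrib mult_1)
    show "good \<alpha> \<epsilon> A B u v \<and> good \<alpha> \<epsilon> A B v u"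
      by (rule caseA_pair[OF al ep]) (use h de M in auto)
  qed
next
  case (Suc N)
  show ?case
  proof (intro allI impI)
    fix u v assume h: "0 < u \<and> u \<le> 2*pi \<and> 2*pi \<le> v \<and> \<alpha> * (v - 4*pi^2/u) \<ge> d + real (Suc N) * e
     \<and> (1-\<alpha>)*(u - 4*pi^2/u) + \<alpha>*(u + v - 4*pi) \<ge> d + real (Suc N) * e
     \<and> psi \<alpha> u \<ge> 2*pi*\<alpha> - real (Suc N) * d"
    define U where "U = 4*pi^2/u"
    define D1 where "D1 = \<alpha> * (v - U)"
    define F where "F = (1-\<alpha>)*(u - U) + \<alpha>*(u + v - 4*pi)"
    define M where "M = u + \<alpha> * v - U"
    have upos: "u > 0" and u2: "u \<le> 2*pi" and v2: "2*pi \<le> v" using h by auto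
    have vpos: "v > 0" using v2 pi_gt_zero by linarith
    have hD1: "D1 \<ge> d + real (Suc N) * e" using h unfolding D1_def U_def by auto
    have hF: "F \<ge> d + real (Suc N) * e" using h unfolding F_def U_def by auto
    have hpsi: "psi \<alpha> u \<ge> 2*pi*\<alpha> - real (Suc N) * d" using h by auto
    have uU: "u * U = 4*pi^2" unfolding U_def using upos by simp
    have psiU: "psi \<alpha> u = u - (1-\<alpha>)*U" unfolding psi_def U_def ..
    have MD: "M = psi \<alpha> u + D1" unfolding M_def D1_def psiU by (simp add: algebra_simps)
    have FM: "F = M + \<alpha> * U - 4*pi*\<alpha>" unfolding F_def M_def by (simp add: algebra_simps)
    have eN: "real (Suc N) * e \<ge> e" using de by simp
    have Ne: "e * real N \<ge> 0" "real N * e \<ge> 0" using de by simp_all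
    have D1pos: "D1 > 0" using hD1 eN de by linarith
    have D1pos': "\<alpha> * (v - 4*pi^2/u) > 0" using D1pos unfolding D1_def U_def .
    show "good \<alpha> \<epsilon> A B u v \<and> good \<alpha> \<epsilon> A B v u"
    proof (cases "M > 2*pi*\<alpha>")
      case True
      show ?thesis
        by (rule caseA_pair[OF al ep upos u2 v2]) (use True D1pos' in \<open>auto simp: M_def U_def\<close>)
    next
      case False
      define cc where "cc = M - e"
      have ccpos: "cc > 0 \<or> \<alpha> < 1"
      proof (cases "\<alpha> = 1")
        case True
        then have "psi \<alpha> u = u" unfolding psi_def by simp
        then have "cc = u + D1 - e" unfolding cc_def MD by simp
        then show ?thesis using upos hD1 eN de by linarith
      next
        case False then show ?thesis using al by simp
      qed
      define w where "w = (cc + sqrt (cc^2 + 16*pi^2*(1-\<alpha>))) / 2"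
      have wpos: "w > 0" and pw: "psi \<alpha> w = cc"
        using psi_inv[OF al(2) al(1) ccpos] unfolding w_def by auto
      have Ugt: "U \<ge> 2*pi"
      proof -
        have "2*pi * u \<le> 2*pi * (2*pi)" using u2 pi_gt_zero by (intro mult_left_mono) auto
        then have "2*pi * u \<le> 4*pi^2" by (simp add: power2_eq_square)
        then show ?thesis unfolding U_def using upos by (simp add: le_divide_eq)
      qed
      have wu: "w > u"
      proof (rule psi_less_imp[OF al(2) wpos])
        show "psi \<alpha> u < psi \<alpha> w" using pw hD1 eN de unfolding cc_def MD by linarith
      qed
      have w2: "w < 2*pi"
      proof (rule psi_less_imp[OF al(2)])
        show "0 < 2*pi" by simp
        show "psi \<alpha> w < psi \<alpha> (2*pi)" using pw False de unfolding cc_def psi_2pi by linarith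
      qed
      have hyp: "u * v > 4*pi^2"
      proof -
        have "v - U > 0" using hD1 de al unfolding D1_def by (smt (verit) mult_nonneg_nonpos of_nat_0_le_iff mult_nonneg_nonneg)
        then have "v > 4*pi^2/u" unfolding U_def by simp
        then show ?thesis using upos by (simp add: divide_less_eq mult.commute)
      qed
      have vw: "4*pi^2/w < v"
      proof -
        have pv: "psi \<alpha> (4*pi^2/v) = 4*pi^2/v - (1-\<alpha>) * v" unfolding psi_def using vpos by simp
        have uv': "u > 4*pi^2/v" using hyp vpos by (simp add: divide_less_eq)
        have "v - U > 0" using hD1 de al unfolding D1_def by (smt (verit) mult_nonneg_nonpos of_nat_0_le_iff mult_nonneg_nonneg)
        then have "\<alpha> * (v - U) \<le> v - U" using al by (simp add: mult_le_cancel_right1)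
        moreover have "M - psi \<alpha> (4*pi^2/v) = u + v - U - 4*pi^2/v"
          unfolding pv M_def by (simp add: algebra_simps)
        ultimately have "M - psi \<alpha> (4*pi^2/v) > e"
          using uv' hD1 eN de unfolding D1_def by linarith
        then have "psi \<alpha> (4*pi^2/v) < psi \<alpha> w" using pw unfolding cc_def by simp
        then have "4*pi^2/v < w" by (rule psi_less_imp[OF al(2) wpos])
        then have "4*pi^2 < w * v" using vpos by (simp add: divide_less_eq)
        then show ?thesis using wpos by (simp add: divide_less_eq mult.commute)
      qed
      have hF': "(1-\<alpha>)*(w - 4*pi^2/w) + \<alpha>*(w + 4*pi^2/u - 4*pi) = F - e"
      proof -
        have "(1-\<alpha>)*(w - 4*pi^2/w) + \<alpha>*(w + U - 4*pi) = psi \<alpha> w + \<alpha> * U - 4*pi*\<alpha>"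
          unfolding psi_def by (simp add: algebra_simps)
        then show ?thesis using pw FM unfolding cc_def U_def by simp
      qed
      have kD: "\<alpha> * (4*pi^2/u - 4*pi^2/w) \<ge> min D1 F - e"
        by (rule key_D1[OF al upos wu less_imp_le[OF w2] _ hF']) (use pw MD in \<open>simp add: cc_def\<close>)
      have IHc: "0 < w \<and> w \<le> 2*pi \<and> 2*pi \<le> U \<and> \<alpha> * (U - 4*pi^2/w) \<ge> d + real N * e
         \<and> (1-\<alpha>)*(w - 4*pi^2/w) + \<alpha>*(w + U - 4*pi) \<ge> d + real N * e
         \<and> psi \<alpha> w \<ge> 2*pi*\<alpha> - real N * d"
      proof (intro conjI)
        show "0 < w" "w \<le> 2*pi" "2*pi \<le> U" using wpos w2 Ugt by auto
        have "min D1 F \<ge> d + real (Suc N) * e" using hD1 hF by simp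
        moreover have sN: "real (Suc N) * e = real N * e + e" by (simp add: algebra_simps)
        ultimately show "\<alpha> * (U - 4*pi^2/w) \<ge> d + real N * e" using kD unfolding U_def by linarith
        show "(1-\<alpha>)*(w - 4*pi^2/w) + \<alpha>*(w + U - 4*pi) \<ge> d + real N * e"
          using hF' hF unfolding U_def by (simp add: algebra_simps)
        have "psi \<alpha> w = psi \<alpha> u + D1 - e" using pw MD unfolding cc_def by simp
        moreover have "real (Suc N) * d = real N * d + d" "real (Suc N) * e = real N * e + e" by (simp_all add: algebra_simps)
        ultimately show "psi \<alpha> w \<ge> 2*pi*\<alpha> - real N * d" using hpsi hD1 de Ne by linarith
      qed
      have IH: "good \<alpha> \<epsilon> A B w U \<and> good \<alpha> \<epsilon> A B U w" using Suc.IH IHc by blast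
      have Upos: "U > 0" using Ugt pi_gt_zero by linarith
      have UU: "4*pi^2/U = u" unfolding U_def using upos by simp
      have ineq: "\<alpha> * (u + v) > psi \<alpha> U + psi \<alpha> w"
      proof -
        have "\<alpha> * (u + v) - psi \<alpha> U = M" unfolding psi_def UU M_def by (simp add: algebra_simps)
        then show ?thesis using pw de unfolding cc_def by linarith
      qed
      have g1: "good \<alpha> \<epsilon> A B u v"
        by (rule good_rule[of \<alpha> u v U w]) (use al upos vpos Upos wpos UU vw hyp IH ineq in auto)
      have g2: "good \<alpha> \<epsilon> A B v u"
        by (rule good_rule[of \<alpha> v u w U]) (use al upos vpos Upos wpos UU vw hyp IH ineq in \<open>auto simp: mult.commute add.commute\<close>)
      show ?thesis using g1 g2 by simp
    qed
  qed
qed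



lemma root_pos:
  assumes al: "0 < \<alpha>" "\<alpha> \<le> 1" and t: "t > (\<alpha> * (4 * pi - v) + sqrt (\<alpha>^2 * (4 * pi - v)^2 + 16 * pi^2 * (1 - \<alpha>))) / 2"
  shows "t^2 + \<alpha> * (v - 4*pi) * t - 4*pi^2*(1-\<alpha>) > 0"
proof -
  define b where "b = \<alpha> * (4 * pi - v)"
  define s where "s = sqrt (b^2 + 16 * pi^2 * (1 - \<alpha>))"
  have rad: "b^2 + 16 * pi^2 * (1 - \<alpha>) \<ge> 0"
  proof -
    have "16*pi^2*(1-\<alpha>) \<ge> 0" using al by simp
    moreover have "b^2 \<ge> 0" by simp
    ultimately show ?thesis by linarith
  qed
  have s2: "s^2 = b^2 + 16 * pi^2 * (1 - \<alpha>)" unfolding s_def by (rule real_sqrt_pow2[OF rad])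
  have s0: "s \<ge> 0" unfolding s_def using rad by simp
  have sb: "s \<ge> b"
  proof -
    have "sqrt (b^2) \<le> s" unfolding s_def using al by (intro real_sqrt_le_mono) simp
    then show ?thesis by simp
  qed
  define r where "r = (b + s) / 2"
  define r2 where "r2 = (b - s) / 2"
  have tr: "t > r" using t unfolding r_def b_def s_def by (simp add: power_mult_distrib)
  have r2r: "r2 \<le> r" unfolding r_def r2_def using s0 by simp
  have prod: "(t - r) * (t - r2) = t^2 + \<alpha> * (v - 4*pi) * t - 4*pi^2*(1-\<alpha>)"
  proof -
    have "(t - r) * (t - r2) = t^2 - b * t + (b^2 - s^2) / 4"
      unfolding r_def r2_def by (simp add: power2_eq_square field_simps)
    also have "\<dots> = t^2 + \<alpha> * (v - 4*pi) * t - 4*pi^2*(1-\<alpha>)"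
      unfolding s2 b_def by (simp add: field_simps)
    finally show ?thesis .
  qed
  have "(t - r) * (t - r2) > 0" using tr r2r by (intro mult_pos_pos) auto
  then show ?thesis using prod by simp
qed

lemma half_good:
  assumes al: "0 < \<alpha>" "\<alpha> \<le> 1" and ep: "\<epsilon> > 0" and v: "v > 2*pi" and u: "u > phi \<alpha> v"
  shows "good \<alpha> \<epsilon> A B u v \<and> good \<alpha> \<epsilon> A B v u"
proof -
  have vpos: "v > 0" using v pi_gt_zero by linarith
  have u1: "u > 4*pi^2/v" using u unfolding phi_def by simp
  have u2: "u > (\<alpha> * (4 * pi - v) + sqrt (\<alpha>^2 * (4 * pi - v)^2 + 16 * pi^2 * (1 - \<alpha>))) / 2"
    using u unfolding phi_def by simp
  have upos: "u > 0" using u1 vpos by (smt (verit) divide_pos_pos pi_gt_zero zero_less_power)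
  show ?thesis
  proof (cases "u > 2*pi")
    case True
    then show ?thesis using good_base[OF ep] v by blast
  next
    case False
    then have ule: "u \<le> 2*pi" by simp
    have hyp: "u * v > 4*pi^2" using u1 vpos by (simp add: divide_less_eq)
    have D1: "\<alpha> * (v - 4*pi^2/u) > 0"
    proof -
      have "v > 4*pi^2/u" using hyp upos by (simp add: divide_less_eq mult.commute)
      then show ?thesis using al by simp
    qed
    define F where "F = (1-\<alpha>)*(u - 4*pi^2/u) + \<alpha>*(u + v - 4*pi)"
    have Fpos: "F > 0"
    proof -
      have "u * F = u^2 + \<alpha> * (v - 4*pi) * u - 4*pi^2*(1-\<alpha>)"
        unfolding F_def using upos by (simp add: field_simps power2_eq_square)
      then have "u * F > 0" using root_pos[OF al u2] by simp
      then show ?thesis using upos by (simp add: zero_less_mult_iff)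
    qed
    define \<mu> where "\<mu> = min (\<alpha> * (v - 4*pi^2/u)) F"
    have mpos: "\<mu> > 0" unfolding \<mu>_def using D1 Fpos by simp
    define d where "d = \<mu> / 2"
    define N where "N = nat \<lceil>(2*pi*\<alpha> - psi \<alpha> u) / d\<rceil>"
    define e where "e = \<mu> / (2 * (real N + 1))"
    have dpos: "d > 0" unfolding d_def using mpos by simp
    have epos: "e > 0" unfolding e_def using mpos by simp
    have dNe: "d + real N * e \<le> \<mu>"
    proof -
      have "real N * e = \<mu> / 2 * (real N / (real N + 1))" unfolding e_def by (simp add: field_simps)
      also have "\<dots> \<le> \<mu> / 2 * 1" using mpos by (intro mult_left_mono) auto
      finally show ?thesis unfolding d_def by simp
    qed
    have Nd: "psi \<alpha> u \<ge> 2*pi*\<alpha> - real N * d"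
    proof -
      have "(2*pi*\<alpha> - psi \<alpha> u) / d \<le> real N" unfolding N_def
        by (meson le_nat_iff le_of_int_ceiling order_trans of_nat_le_iff real_nat_ceiling_ge)
      then have "2*pi*\<alpha> - psi \<alpha> u \<le> real N * d" using dpos by (simp add: divide_le_eq)
      then show ?thesis by simp
    qed
    have "d + real N * e \<le> \<alpha> * (v - 4*pi^2/u)" "d + real N * e \<le> F"
      using dNe unfolding \<mu>_def by auto
    then show ?thesis
      using claim[OF al ep dpos epos, of N A B] upos ule v Nd unfolding F_def by auto
  qed
qed

lemma dom_good:
  assumes al: "0 < \<alpha>" "\<alpha> \<le> 1" and ep: "\<epsilon> > 0" and D: "(x, y) \<in> Dom \<alpha>"
  shows "good \<alpha> \<epsilon> A B x y"
  using D half_good[OF al ep, of y x A B] half_good[OF al ep, of x y A B] unfolding Dom_def by auto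

lemma dom_pos:
  assumes "(x, y) \<in> Dom \<alpha>"
  shows "x > 0" "y > 0"
proof -
  have a: "x > 0 \<and> y > 0" if "v > 2*pi" "u > phi \<alpha> v" "(u = x \<and> v = y) \<or> (u = y \<and> v = x)" for u v
  proof -
    have vpos: "v > 0" using that pi_gt_zero by linarith
    have "u > 4*pi^2/v" using that unfolding phi_def by simp
    then have "u > 0" using vpos by (smt (verit) divide_pos_pos pi_gt_zero zero_less_power)
    then show ?thesis using vpos that(3) by auto
  qed
  show "x > 0" "y > 0" using assms a unfolding Dom_def by auto
qed



lemma dom_bound:
  assumes al: "0 < \<alpha>" "\<alpha> \<le> 1" and ep: "\<epsilon> > 0" and D: "(x, y) \<in> Dom \<alpha>"
  shows "\<exists>K::real. \<forall>c n. in_class \<alpha> \<epsilon> A B c n \<longrightarrow>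
               \<bar>ln (Zpart c n x y) - c / 24 * (x + y)\<bar> \<le> K"
proof -
  have pos: "x > 0" "y > 0" using dom_pos[OF D] by auto
  obtain K where K: "\<And>c n. in_class \<alpha> \<epsilon> A B c n \<Longrightarrow> Wf n x y \<le> K"
    using dom_good[OF al ep D] unfolding good_def by blast
  define L0 where "L0 = (1 - exp (-x)) * (1 - exp (-y)) / (Pr x * Pr y)"
  have L0pos: "L0 > 0" unfolding L0_def by (rule Wf_lower_pos[OF pos])
  define K2 where "K2 = max K L0"
  have K2pos: "K2 > 0" unfolding K2_def using L0pos by simp
  show ?thesis
  proof (intro exI allI impI)
    fix c n assume cl: "in_class \<alpha> \<epsilon> A B c n"
    have cft: "is_CFT c n" using cl unfolding in_class_def by blast
    have lo: "L0 \<le> Wf n x y" unfolding L0_def by (rule Wf_lower[OF cft pos])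
    have Wpos: "Wf n x y > 0" using lo L0pos by simp
    have hi: "Wf n x y \<le> K2" using K[OF cl] unfolding K2_def by simp
    have "ln (Zpart c n x y) = c / 24 * (x + y) + ln (Wf n x y)"
      unfolding Zpart_Wf[OF pos] using Wpos by (simp add: ln_mult)
    then have eq: "ln (Zpart c n x y) - c / 24 * (x + y) = ln (Wf n x y)" by simp
    have "ln L0 \<le> ln (Wf n x y)" using lo L0pos by simp
    moreover have "ln (Wf n x y) \<le> ln K2" using hi Wpos by simp
    ultimately show "\<bar>ln (Zpart c n x y) - c / 24 * (x + y)\<bar> \<le> \<bar>ln L0\<bar> + \<bar>ln K2\<bar>"
      unfolding eq by linarith
  qed
qed

theorem corollary2:
  fixes \<alpha> \<epsilon> :: real and A :: "real \<Rightarrow> real" and B :: "real \<Rightarrow> real \<Rightarrow> real"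
  assumes "0 < \<alpha>" and "\<alpha> \<le> 1" and "\<epsilon> > 0"
    and "\<forall>\<beta>. \<beta> > 2 * pi \<longrightarrow> A \<beta> \<ge> 0"
    and "\<forall>\<beta>L \<beta>R. \<beta>L > 0 \<and> \<beta>R > 0 \<and> \<beta>L * \<beta>R > 4 * pi^2 \<longrightarrow> B \<beta>L \<beta>R \<ge> 0"
  shows "(\<forall>\<beta>L \<beta>R. (\<beta>L, \<beta>R) \<in> Dom \<alpha> \<longrightarrow>
            (\<exists>K::real. \<forall>c n. in_class \<alpha> \<epsilon> A B c n \<longrightarrow>
               \<bar>ln (Zpart c n \<beta>L \<beta>R) - c / 24 * (\<beta>L + \<beta>R)\<bar> \<le> K)) \<and>
         (\<forall>\<beta>L \<beta>R. (4 * pi^2 / \<beta>L, 4 * pi^2 / \<beta>R) \<in> Dom \<alpha> \<longrightarrow>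
            (\<exists>K::real. \<forall>c n. in_class \<alpha> \<epsilon> A B c n \<longrightarrow>
               \<bar>ln (Zpart c n \<beta>L \<beta>R) - pi^2 * c / 6 * (1 / \<beta>L + 1 / \<beta>R)\<bar> \<le> K))"
proof (intro conjI allI impI)
  fix x y assume D: "(x, y) \<in> Dom \<alpha>"
  show "\<exists>K::real. \<forall>c n. in_class \<alpha> \<epsilon> A B c n \<longrightarrow> \<bar>ln (Zpart c n x y) - c / 24 * (x + y)\<bar> \<le> K"
    by (rule dom_bound[OF assms(1-3) D])
next
  fix x y assume D: "(4 * pi^2 / x, 4 * pi^2 / y) \<in> Dom \<alpha>"
  have p': "4 * pi^2 / x > 0" "4 * pi^2 / y > 0" using dom_pos[OF D] by auto
  have pos: "x > 0" "y > 0"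
  proof -
    show "x > 0" using p'(1) by (simp add: zero_less_divide_iff)
    show "y > 0" using p'(2) by (simp add: zero_less_divide_iff)
  qed
  obtain K where K: "\<And>c n. in_class \<alpha> \<epsilon> A B c n \<Longrightarrow>
      \<bar>ln (Zpart c n (4 * pi^2 / x) (4 * pi^2 / y)) - c / 24 * (4 * pi^2 / x + 4 * pi^2 / y)\<bar> \<le> K"
    using dom_bound[OF assms(1-3) D] by blast
  show "\<exists>K::real. \<forall>c n. in_class \<alpha> \<epsilon> A B c n \<longrightarrow>
      \<bar>ln (Zpart c n x y) - pi^2 * c / 6 * (1 / x + 1 / y)\<bar> \<le> K"
  proof (intro exI allI impI)
    fix c n assume cl: "in_class \<alpha> \<epsilon> A B c n"
    have cft: "is_CFT c n" using cl unfolding in_class_def by blast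
    have Z: "Zpart c n x y = Zpart c n (4 * pi^2 / x) (4 * pi^2 / y)"
      using cft pos unfolding is_CFT_def by blast
    have E: "pi^2 * c / 6 * (1 / x + 1 / y) = c / 24 * (4 * pi^2 / x + 4 * pi^2 / y)"
      by (simp add: field_simps)
    show "\<bar>ln (Zpart c n x y) - pi^2 * c / 6 * (1 / x + 1 / y)\<bar> \<le> K"
      unfolding Z E using K[OF cl] .
  qed
qed


end
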